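(* Let $\mathfrak V$ be a vessel on $\Omega\subseteq\mathbb R$ with transfer function $S(\lambda,x)=I-C(x)\mathbb X^{-1}(x)(\lambda I-A)^{-1}B(x)\sigma_1$. Fix $\lambda$ not in the spectrum of $A$, and let $u(\lambda,x)\in\mathbb C^2$ be a differentiable solution (in $x$) of $\lambda\sigma_2u-\sigma_1\partial_xu+\gamma u=0$. Then $y(\lambda,x)=S(\lambda,x)u(\lambda,x)$ satisfies $\lambda\sigma_2y-\sigma_1\partial_xy+\gamma_*(x)y=0$ for $x\in\Omega$.
   Context: A Krein space $\mathcal K$ is a Hilbert space with an extra continuous Hermitian (possibly indefinite) sesquilinear form; adjoints are taken with respect to it. Fix $2\times2$ matrices $\sigma_1$ (invertible, $\sigma_1=\sigma_1^*$), $\sigma_2=\sigma_2^*$, $\gamma=-\gamma^*$. A node $(C,A_\zeta,\mathbb X,A,B;\sigma_1)$: bounded $C:\mathcal K\to\mathbb C^2$, $\mathbb X:\mathcal K\to\mathcal K$, $B:\mathbb C^2\to\mathcal K$, and generators $A,A_\zeta$ of strongly continuous groups with common dense domain $D(A)=D(A_\zeta)$, such that $\mathbb X(D(A))\subseteq D(A)$ and $A\mathbb Xu+\mathbb XA_\zeta u+B\sigma_1Cu=0$ for $u\in D(A)$; invertible if $\mathbb X$ is boundedly invertible and $\mathbb X^{-1}(D(A))\subseteq D(A)$. A prevessel consists of fixed $A,A_\zeta$ and bounded operators $C(x),\mathbb X(x),B(x)$, differentiable in $x\in\mathbb R$, such that for each $x$ the tuple is a node, $B(x)\sigma_2e\in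 D(A)$ for all $e\in\mathbb C^2$, and $\partial_xB=-(AB\sigma_2+B\gamma)\sigma_1^{-1}$, $\partial_xCu=\sigma_1^{-1}(-\sigma_2CA_\zeta u+\gamma Cu)$ ($u\in D(A)$), $\partial_x\mathbb X=B\sigma_2C$. A vessel on $\Omega\subseteq\mathbb R$ is a prevessel such that for each $x\in\Omega$, $\mathbb X(x)$ is invertible and the node at $x$ is invertible, together with $\gamma_*(x)=\gamma+\sigma_2C\mathbb X^{-1}B\sigma_1-\sigma_1C\mathbb X^{-1}B\sigma_2$ on $\Omega$ (linkage condition). *)

theory Defs
  imports "HOL-Analysis.Analysis"
begin

text \<open>A complex Hilbert space is modelled as a real Hilbert space (type class real_inner,
complete_space) together with a complex scalar multiplication sc that extends the real one
and is compatible with the norm.\<close>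

definition complex_structure :: "(complex \<Rightarrow> 'k::real_normed_vector \<Rightarrow> 'k) \<Rightarrow> bool" where
  "complex_structure sc \<longleftrightarrow>
     (\<forall>a b x. sc a (sc b x) = sc (a * b) x) \<and>
     (\<forall>a x y. sc a (x + y) = sc a x + sc a y) \<and>
     (\<forall>a b x. sc (a + b) x = sc a x + sc b x) \<and>
     (\<forall>r x. sc (complex_of_real r) x = r *\<^sub>R x) \<and>
     (\<forall>a x. norm (sc a x) = cmod a * norm x)"

definition krein_space ::
  "(complex \<Rightarrow> 'k::{real_inner,complete_space} \<Rightarrow> 'k) \<Rightarrow> ('k \<Rightarrow> 'k \<Rightarrow> complex) \<Rightarrow> bool" where
  "krein_space sc F \<longleftrightarrow> complex_structure sc \<and>
     (\<forall>x y z. F (x + y) z = F x z + F y z) \<and>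
     (\<forall>c x y. F (sc c x) y = c * F x y) \<and>
     (\<forall>x y. F y x = cnj (F x y)) \<and>
     (\<exists>K. \<forall>x y. cmod (F x y) \<le> K * norm x * norm y)"

definition clinear_op :: "(complex \<Rightarrow> 'k::real_normed_vector \<Rightarrow> 'k) \<Rightarrow> ('k \<Rightarrow> 'k) \<Rightarrow> bool" where
  "clinear_op sc T \<longleftrightarrow> bounded_linear T \<and> (\<forall>c u. T (sc c u) = sc c (T u))"

definition clinear_to :: "(complex \<Rightarrow> 'k::real_normed_vector \<Rightarrow> 'k) \<Rightarrow> ('k \<Rightarrow> complex^2) \<Rightarrow> bool" where
  "clinear_to sc T \<longleftrightarrow> bounded_linear T \<and> (\<forall>c u. T (sc c u) = c *s T u)"

definition clinear_from :: "(complex \<Rightarrow> 'k::real_normed_vector \<Rightarrow> 'k) \<Rightarrow> (complex^2 \<Rightarrow> 'k) \<Rightarrow> bool" where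
  "clinear_from sc T \<longleftrightarrow> bounded_linear T \<and> (\<forall>c e. T (c *s e) = sc c (T e))"

definition cmat :: "(complex^2 \<Rightarrow> complex^2) \<Rightarrow> complex^2^2" where
  "cmat f = (\<chi> i j. f (axis j 1) $ i)"

definition cadj :: "complex^2^2 \<Rightarrow> complex^2^2" where
  "cadj M = (\<chi> i j. cnj (M $ j $ i))"

definition sc_group_gen ::
  "(complex \<Rightarrow> 'k::real_normed_vector \<Rightarrow> 'k) \<Rightarrow> (real \<Rightarrow> 'k \<Rightarrow> 'k) \<Rightarrow> ('k \<Rightarrow> 'k) \<Rightarrow> 'k set \<Rightarrow> bool" where
  "sc_group_gen sc T A D \<longleftrightarrow>
     (\<forall>t. clinear_op sc (T t)) \<and> T 0 = id \<and> (\<forall>s t. T (s + t) = T s \<circ> T t) \<and>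
     (\<forall>u. continuous_on UNIV (\<lambda>t. T t u)) \<and>
     D = {u. \<exists>v. ((\<lambda>h. inverse h *\<^sub>R (T h u - u)) \<longlongrightarrow> v) (at 0)} \<and>
     (\<forall>u\<in>D. ((\<lambda>h. inverse h *\<^sub>R (T h u - u)) \<longlongrightarrow> A u) (at 0))"

definition group_generator :: "(complex \<Rightarrow> 'k::real_normed_vector \<Rightarrow> 'k) \<Rightarrow> ('k \<Rightarrow> 'k) \<Rightarrow> 'k set \<Rightarrow> bool" where
  "group_generator sc A D \<longleftrightarrow> (\<exists>T. sc_group_gen sc T A D)"

definition is_resolvent ::
  "(complex \<Rightarrow> 'k::real_normed_vector \<Rightarrow> 'k) \<Rightarrow> ('k \<Rightarrow> 'k) \<Rightarrow> 'k set \<Rightarrow> complex \<Rightarrow> ('k \<Rightarrow> 'k) \<Rightarrow> bool" where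
  "is_resolvent sc A D lam R \<longleftrightarrow> clinear_op sc R \<and> range R \<subseteq> D \<and>
     (\<forall>u. sc lam (R u) - A (R u) = u) \<and> (\<forall>v\<in>D. R (sc lam v - A v) = v)"

definition op_spectrum :: "(complex \<Rightarrow> 'k::real_normed_vector \<Rightarrow> 'k) \<Rightarrow> ('k \<Rightarrow> 'k) \<Rightarrow> 'k set \<Rightarrow> complex set" where
  "op_spectrum sc A D = {lam. \<not> (\<exists>R. is_resolvent sc A D lam R)}"

definition resolvent :: "(complex \<Rightarrow> 'k::real_normed_vector \<Rightarrow> 'k) \<Rightarrow> ('k \<Rightarrow> 'k) \<Rightarrow> 'k set \<Rightarrow> complex \<Rightarrow> 'k \<Rightarrow> 'k" where
  "resolvent sc A D lam = (THE R. is_resolvent sc A D lam R)"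

definition is_node ::
  "(complex \<Rightarrow> 'k::real_normed_vector \<Rightarrow> 'k) \<Rightarrow> complex^2^2 \<Rightarrow> ('k \<Rightarrow> complex^2) \<Rightarrow> ('k \<Rightarrow> 'k) \<Rightarrow> ('k \<Rightarrow> 'k)
    \<Rightarrow> ('k \<Rightarrow> 'k) \<Rightarrow> (complex^2 \<Rightarrow> 'k) \<Rightarrow> 'k set \<Rightarrow> bool" where
  "is_node sc \<sigma>1 C A\<zeta> X A B D \<longleftrightarrow>
     clinear_to sc C \<and> clinear_op sc X \<and> clinear_from sc B \<and>
     group_generator sc A D \<and> group_generator sc A\<zeta> D \<and> closure D = UNIV \<and>
     X ` D \<subseteq> D \<and>
     (\<forall>u\<in>D. A (X u) + X (A\<zeta> u) + B (\<sigma>1 *v C u) = 0)"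

definition invertible_node ::
  "(complex \<Rightarrow> 'k::real_normed_vector \<Rightarrow> 'k) \<Rightarrow> complex^2^2 \<Rightarrow> ('k \<Rightarrow> complex^2) \<Rightarrow> ('k \<Rightarrow> 'k) \<Rightarrow> ('k \<Rightarrow> 'k)
    \<Rightarrow> ('k \<Rightarrow> 'k) \<Rightarrow> (complex^2 \<Rightarrow> 'k) \<Rightarrow> 'k set \<Rightarrow> bool" where
  "invertible_node sc \<sigma>1 C A\<zeta> X A B D \<longleftrightarrow>
     is_node sc \<sigma>1 C A\<zeta> X A B D \<and> bij X \<and> clinear_op sc (inv X) \<and> inv X ` D \<subseteq> D"

text \<open>Differentiability in x is understood strongly (pointwise on vectors).\<close>
definition prevessel ::
  "(complex \<Rightarrow> 'k::real_normed_vector \<Rightarrow> 'k) \<Rightarrow> complex^2^2 \<Rightarrow> complex^2^2 \<Rightarrow> complex^2^2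
    \<Rightarrow> ('k \<Rightarrow> 'k) \<Rightarrow> ('k \<Rightarrow> 'k) \<Rightarrow> 'k set
    \<Rightarrow> (real \<Rightarrow> 'k \<Rightarrow> complex^2) \<Rightarrow> (real \<Rightarrow> 'k \<Rightarrow> 'k) \<Rightarrow> (real \<Rightarrow> complex^2 \<Rightarrow> 'k) \<Rightarrow> bool" where
  "prevessel sc \<sigma>1 \<sigma>2 \<gamma> A A\<zeta> D C X B \<longleftrightarrow>
     (\<forall>x. is_node sc \<sigma>1 (C x) A\<zeta> (X x) A (B x) D) \<and>
     (\<forall>x e. B x (\<sigma>2 *v e) \<in> D) \<and>
     (\<forall>x e. ((\<lambda>t. B t e) has_vector_derivative
              (- (A (B x (\<sigma>2 *v (matrix_inv \<sigma>1 *v e))) + B x (\<gamma> *v (matrix_inv \<sigma>1 *v e))))) (at x)) \<and>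
     (\<forall>x u. (\<lambda>t. C t u) differentiable (at x)) \<and>
     (\<forall>x. \<forall>u\<in>D. ((\<lambda>t. C t u) has_vector_derivative
              (matrix_inv \<sigma>1 *v (- (\<sigma>2 *v C x (A\<zeta> u)) + \<gamma> *v C x u))) (at x)) \<and>
     (\<forall>x u. ((\<lambda>t. X t u) has_vector_derivative B x (\<sigma>2 *v C x u)) (at x))"

definition vessel ::
  "(complex \<Rightarrow> 'k::real_normed_vector \<Rightarrow> 'k) \<Rightarrow> complex^2^2 \<Rightarrow> complex^2^2 \<Rightarrow> complex^2^2
    \<Rightarrow> ('k \<Rightarrow> 'k) \<Rightarrow> ('k \<Rightarrow> 'k) \<Rightarrow> 'k set
    \<Rightarrow> (real \<Rightarrow> 'k \<Rightarrow> complex^2) \<Rightarrow> (real \<Rightarrow> 'k \<Rightarrow> 'k) \<Rightarrow> (real \<Rightarrow> complex^2 \<Rightarrow> 'k)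
    \<Rightarrow> (real \<Rightarrow> complex^2^2) \<Rightarrow> real set \<Rightarrow> bool" where
  "vessel sc \<sigma>1 \<sigma>2 \<gamma> A A\<zeta> D C X B \<gamma>s \<Omega> \<longleftrightarrow>
     prevessel sc \<sigma>1 \<sigma>2 \<gamma> A A\<zeta> D C X B \<and>
     (\<forall>x\<in>\<Omega>. invertible_node sc \<sigma>1 (C x) A\<zeta> (X x) A (B x) D) \<and>
     (\<forall>x\<in>\<Omega>. \<gamma>s x = \<gamma> + \<sigma>2 ** cmat (\<lambda>e. C x (inv (X x) (B x (\<sigma>1 *v e))))
                         - \<sigma>1 ** cmat (\<lambda>e. C x (inv (X x) (B x (\<sigma>2 *v e)))))"

definition transfer_fn ::
  "(complex \<Rightarrow> 'k::real_normed_vector \<Rightarrow> 'k) \<Rightarrow> ('k \<Rightarrow> 'k) \<Rightarrow> 'k set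
    \<Rightarrow> (real \<Rightarrow> 'k \<Rightarrow> complex^2) \<Rightarrow> (real \<Rightarrow> 'k \<Rightarrow> 'k) \<Rightarrow> (real \<Rightarrow> complex^2 \<Rightarrow> 'k)
    \<Rightarrow> complex^2^2 \<Rightarrow> complex \<Rightarrow> real \<Rightarrow> complex^2^2" where
  "transfer_fn sc A D C X B \<sigma>1 lam x =
     mat 1 - cmat (\<lambda>e. C x (inv (X x) (resolvent sc A D lam (B x (\<sigma>1 *v e)))))"

end

theory Submission imports Defs begin

lemma BS:
  fixes T :: "'i \<Rightarrow> 'a::{real_normed_vector,complete_space} \<Rightarrow> 'b::real_normed_vector"
  assumes lin: "\<And>i. i\<in>I \<Longrightarrow> bounded_linear (T i)"
    and pb: "\<And>v. \<exists>K. \<forall>i\<in>I. norm (T i v) \<le> K"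
  shows "\<exists>M. \<forall>i\<in>I. \<forall>v. norm (T i v) \<le> M * norm v"
proof -
  define E where "E n = {v. \<forall>i\<in>I. norm (T i v) \<le> real n}" for n :: nat
  have cl: "closed (E n)" for n
  proof -
    have "E n = (\<Inter>i\<in>I. {v. norm (T i v) \<le> real n})" by (auto simp: E_def)
    moreover have "closed {v. norm (T i v) \<le> real n}" if "i \<in> I" for i
      using lin[OF that]
      by (intro closed_Collect_le continuous_intros) (auto intro: bounded_linear.continuous_on)
    ultimately show ?thesis by auto
  qed
  have un: "(\<Union>n. E n) = UNIV"
  proof -
    have "v \<in> (\<Union>n. E n)" for v
    proof -
    obtain K where K: "\<forall>i\<in>I. norm (T i v) \<le> K" using pb by blast
    obtain n where "K \<le> real n" using real_arch_simple by blast
    then have "v \<in> E n" using K by (force simp: E_def)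
    then show "v \<in> (\<Union>n. E n)" by blast
    qed
    then show ?thesis by blast
  qed
  have "\<exists>n. interior (E n) \<noteq> {}"
  proof (rule ccontr)
    assume "\<not> ?thesis"
    then have "euclidean interior_of \<Union>(range E) = {}"
      by (intro Baire_category_alt) (auto simp: completely_metrizable_space_euclidean cl closed_closedin[symmetric])
    then show False using un by simp
  qed
  then obtain n v0 where "v0 \<in> interior (E n)" by blast
  then obtain r where r: "r > 0" "ball v0 r \<subseteq> E n"
    by (meson open_contains_ball open_interior interior_subset subset_trans)
  have v0: "v0 \<in> E n" using r by auto
  show ?thesis
  proof (intro exI ballI allI)
    fix i v assume i: "i \<in> I"
    interpret bl: bounded_linear "T i" using lin[OF i] .
    show "norm (T i v) \<le> (4 * real n / r) * norm v"
    proof (cases "v = 0")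
      case True then show ?thesis by (simp add: bl.zero)
    next
      case False
      define w where "w = (r / (2 * norm v)) *\<^sub>R v"
      have nw: "norm w < r" using False r by (simp add: w_def)
      then have "v0 + w \<in> E n" using r by (auto simp: dist_norm)
      then have a: "norm (T i (v0 + w)) \<le> real n" using i by (auto simp: E_def)
      have b: "norm (T i v0) \<le> real n" using v0 i by (auto simp: E_def)
      have "norm (T i w) \<le> 2 * real n"
        using a b norm_triangle_ineq4[of "T i (v0 + w)" "T i v0"] by (simp add: bl.add)
      moreover have "T i v = (2 * norm v / r) *\<^sub>R T i w"
        using False r by (simp add: w_def bl.scaleR)
      ultimately have "norm (T i v) \<le> (2 * norm v / r) * (2 * real n)"
        using r by (simp add: mult_left_mono del: times_divide_eq_left)
      also have "\<dots> = (4 * real n / r) * norm v" by simp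
      finally show ?thesis .
    qed
  qed
qed

lemma vd_iff:
  fixes f :: "real \<Rightarrow> 'a::real_normed_vector"
  shows "(f has_vector_derivative f') (at x) \<longleftrightarrow> ((\<lambda>t. (f t - f x) /\<^sub>R (t - x)) \<longlongrightarrow> f') (at x)" (is "_ \<longleftrightarrow> ?rhs")
proof -
  have "(f has_vector_derivative f') (at x) \<longleftrightarrow>
     ((\<lambda>y. norm ((f y - f x) - (y - x) *\<^sub>R f') / norm (y - x)) \<longlongrightarrow> 0) (at x)"
    unfolding has_vector_derivative_def has_derivative_iff_norm
    by (simp add: bounded_linear_scaleR_left)
  also have "\<dots> \<longleftrightarrow> ((\<lambda>y. norm ((f y - f x) /\<^sub>R (y - x) - f')) \<longlongrightarrow> 0) (at x)"
  proof (rule tendsto_cong)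
    show "\<forall>\<^sub>F y in at x. norm ((f y - f x) - (y - x) *\<^sub>R f') / norm (y - x) = norm ((f y - f x) /\<^sub>R (y - x) - f')"
      unfolding eventually_at_filter
    proof (intro always_eventually allI impI)
      fix y :: real assume "y \<noteq> x"
      then have "(f y - f x) /\<^sub>R (y - x) - f' = (1 / (y - x)) *\<^sub>R ((f y - f x) - (y - x) *\<^sub>R f')"
        by (simp add: scaleR_diff_right scaleR_scaleR divide_inverse)
      then show "norm ((f y - f x) - (y - x) *\<^sub>R f') / norm (y - x) = norm ((f y - f x) /\<^sub>R (y - x) - f')"
        by (simp add: divide_simps)
    qed
  qed
  also have "\<dots> \<longleftrightarrow> ?rhs"
    by (simp add: tendsto_norm_zero_iff LIM_zero_iff)
  finally show ?thesis .
qed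

lemma lip:
  fixes T :: "real \<Rightarrow> 'a::{real_normed_vector,complete_space} \<Rightarrow> 'b::real_normed_vector"
  assumes lin: "\<And>t. bounded_linear (T t)" and d: "\<And>v. (\<lambda>t. T t v) differentiable (at x)"
  shows "\<exists>M \<delta>. \<delta> > 0 \<and> (\<forall>t v. \<bar>t - x\<bar> < \<delta> \<longrightarrow> norm (T t v - T x v) \<le> M * \<bar>t - x\<bar> * norm v)"
proof (rule ccontr)
  assume "\<not> ?thesis"
  then have "\<forall>n::nat. \<exists>t v. \<bar>t - x\<bar> < inverse (real (Suc n)) \<and> norm (T t v - T x v) > real n * \<bar>t - x\<bar> * norm v"
    by (metis inverse_positive_iff_positive not_le of_nat_0_less_iff zero_less_Suc)
  then obtain t v where tv: "\<And>n. \<bar>t n - x\<bar> < inverse (real (Suc n))"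
     "\<And>n. norm (T (t n) (v n) - T x (v n)) > real n * \<bar>t n - x\<bar> * norm (v n)"
    by metis
  have tx: "t n \<noteq> x" for n
    using tv(2)[of n] by auto
  have "t \<longlonglongrightarrow> x"
  proof -
    have "(\<lambda>n. t n - x) \<longlonglongrightarrow> 0"
      by (rule tendsto_0_le[OF LIMSEQ_inverse_real_of_nat, where K=1]) (use tv(1) less_imp_le in \<open>auto intro: always_eventually\<close>)
    then show ?thesis by (simp add: LIM_zero_iff)
  qed
  then have tat: "filterlim t (at x) sequentially"
    using tx by (intro filterlim_atI) auto
  define Q where "Q n w = (T (t n) w - T x w) /\<^sub>R (t n - x)" for n w
  have Qlin: "bounded_linear (Q n)" for n
    unfolding Q_def
    by (intro bounded_linear_compose[OF bounded_linear_scaleR_right] bounded_linear_sub lin)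
  have "\<exists>K. \<forall>n\<in>UNIV. norm (Q n w) \<le> K" for w
  proof -
    have "((\<lambda>s. T s w) has_vector_derivative vector_derivative (\<lambda>s. T s w) (at x)) (at x)"
      using d vector_derivative_works by blast
    then have "((\<lambda>s. (T s w - T x w) /\<^sub>R (s - x)) \<longlongrightarrow> vector_derivative (\<lambda>s. T s w) (at x)) (at x)"
      by (simp add: vd_iff)
    then have "(\<lambda>n. Q n w) \<longlonglongrightarrow> vector_derivative (\<lambda>s. T s w) (at x)"
      unfolding Q_def using tat by (rule filterlim_compose)
    then have "Bseq (\<lambda>n. Q n w)" by (intro convergent_imp_Bseq convergentI)
    then show ?thesis by (auto simp: Bseq_def)
  qed
  then obtain M where M: "\<And>n w. norm (Q n w) \<le> M * norm w"
    using BS[of UNIV Q] Qlin by blast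
  obtain n :: nat where n: "M \<le> real n" using real_arch_simple by blast
  have "T (t n) (v n) - T x (v n) = (t n - x) *\<^sub>R Q n (v n)"
    using tx[of n] by (simp add: Q_def)
  then have "norm (T (t n) (v n) - T x (v n)) = \<bar>t n - x\<bar> * norm (Q n (v n))" by simp
  also have "\<dots> \<le> \<bar>t n - x\<bar> * (M * norm (v n))" by (intro mult_left_mono M) auto
  also have "\<dots> \<le> \<bar>t n - x\<bar> * (real n * norm (v n))"
    by (intro mult_left_mono mult_right_mono n) auto
  finally show False using tv(2)[of n] by (simp add: mult_ac)
qed

lemma vd_cont0:
  assumes "(w has_vector_derivative w') (at x)"
  shows "((\<lambda>t. w t - w x) \<longlongrightarrow> 0) (at x)"
  using has_vector_derivative_continuous[OF assms] by (simp add: continuous_at LIM_zero)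

lemma deriv_apply:
  fixes T :: "real \<Rightarrow> 'a::{real_normed_vector,complete_space} \<Rightarrow> 'b::real_normed_vector"
  assumes lin: "\<And>t. bounded_linear (T t)" and d: "\<And>v. (\<lambda>t. T t v) differentiable (at x)"
    and dw: "((\<lambda>t. T t (w x)) has_vector_derivative d0) (at x)"
    and w: "(w has_vector_derivative w') (at x)"
  shows "((\<lambda>t. T t (w t)) has_vector_derivative (T x w' + d0)) (at x)"
proof -
  obtain M \<delta> where M: "\<delta> > 0" "\<And>t v. \<bar>t - x\<bar> < \<delta> \<Longrightarrow> norm (T t v - T x v) \<le> M * \<bar>t - x\<bar> * norm v"
    using lip[OF lin d] by blast
  define q where "q t = (w t - w x) /\<^sub>R (t - x)" for t
  have q: "(q \<longlongrightarrow> w') (at x)" using w unfolding vd_iff q_def[abs_def] .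
  have p: "((\<lambda>t. (T t (w x) - T x (w x)) /\<^sub>R (t - x)) \<longlongrightarrow> d0) (at x)"
    using dw by (simp add: vd_iff)
  have A: "((\<lambda>t. T t (q t) - T x (q t)) \<longlongrightarrow> 0) (at x)"
  proof (rule Lim_null_comparison)
    show "\<forall>\<^sub>F t in at x. norm (T t (q t) - T x (q t)) \<le> M * norm (w t - w x)"
      unfolding eventually_at
    proof (intro exI[of _ \<delta>] conjI M(1) ballI impI)
      fix t assume t: "t \<in> UNIV" "t \<noteq> x \<and> dist t x < \<delta>"
      then have "norm (T t (q t) - T x (q t)) \<le> M * (\<bar>t - x\<bar> * norm (q t))"
        using M(2)[of t "q t"] by (auto simp: dist_real_def mult.assoc)
      also have "\<bar>t - x\<bar> * norm (q t) = norm (w t - w x)"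
        using t by (simp add: q_def)
      finally show "norm (T t (q t) - T x (q t)) \<le> M * norm (w t - w x)" .
    qed
    show "((\<lambda>t. M * norm (w t - w x)) \<longlongrightarrow> 0) (at x)"
      using tendsto_mult_right_zero[OF tendsto_norm_zero[OF vd_cont0[OF w]]] by simp
  qed
  have B: "((\<lambda>t. T x (q t)) \<longlongrightarrow> T x w') (at x)"
    using bounded_linear.tendsto[OF lin q] .
  have C: "((\<lambda>t. (T t (q t) - T x (q t)) + T x (q t) + (T t (w x) - T x (w x)) /\<^sub>R (t - x)) \<longlongrightarrow> 0 + T x w' + d0) (at x)"
    by (intro tendsto_add A B p)
  show ?thesis
    unfolding vd_iff
  proof (rule Lim_transform_eventually[OF C[simplified]])
    show "\<forall>\<^sub>F t in at x. T t (q t) + (T t (w x) - T x (w x)) /\<^sub>R (t - x) = (T t (w t) - T x (w x)) /\<^sub>R (t - x)"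
      unfolding eventually_at_filter
    proof (intro always_eventually allI impI)
      fix t assume "t \<noteq> x"
      interpret bl: bounded_linear "T t" using lin .
      show "T t (q t) + (T t (w x) - T x (w x)) /\<^sub>R (t - x) = (T t (w t) - T x (w x)) /\<^sub>R (t - x)"
        by (simp add: q_def bl.scaleR bl.diff scaleR_right_distrib[symmetric] del: scaleR_diff_right)
    qed
  qed
qed

lemma null_family:
  fixes S :: "'c \<Rightarrow> 'a::real_normed_vector \<Rightarrow> 'b::real_normed_vector"
  assumes "eventually (\<lambda>t. \<forall>z. norm (S t z) \<le> K * norm z) F" "(g \<longlongrightarrow> 0) F"
  shows "((\<lambda>t. S t (g t)) \<longlongrightarrow> 0) F"
proof (rule Lim_null_comparison)
  show "\<forall>\<^sub>F t in F. norm (S t (g t)) \<le> K * norm (g t)"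
    using assms(1) by (rule eventually_mono) blast
  show "((\<lambda>t. K * norm (g t)) \<longlongrightarrow> 0) F"
    using tendsto_mult_right_zero[OF tendsto_norm_zero[OF assms(2)]] .
qed

lemma deriv_inv:
  fixes X :: "real \<Rightarrow> 'a::{real_normed_vector,complete_space} \<Rightarrow> 'a"
  assumes lin: "\<And>t. bounded_linear (X t)" and om: "open \<Omega>" "x \<in> \<Omega>"
    and bij: "\<And>t. t \<in> \<Omega> \<Longrightarrow> bij (X t)" and ilin: "\<And>t. t \<in> \<Omega> \<Longrightarrow> bounded_linear (inv (X t))"
    and dX: "\<And>v. ((\<lambda>t. X t v) has_vector_derivative X' v) (at x)"
    and w: "(w has_vector_derivative w') (at x)"
  shows "((\<lambda>t. inv (X t) (w t)) has_vector_derivative inv (X x) (w' - X' (inv (X x) (w x)))) (at x)"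
proof -
  have dXd: "(\<lambda>t. X t v) differentiable (at x)" for v
    using dX by (rule differentiableI_vector)
  obtain M \<delta> where M: "\<delta> > 0" "\<And>t v. \<bar>t - x\<bar> < \<delta> \<Longrightarrow> norm (X t v - X x v) \<le> M * \<bar>t - x\<bar> * norm v"
    using lip[OF lin dXd] by blast
  obtain N where N: "N > 0" "\<And>v. norm (inv (X x) v) \<le> N * norm v"
    using bounded_linear.pos_bounded[OF ilin[OF om(2)]] by (auto simp: mult.commute)
  define good where "good t \<longleftrightarrow> t \<in> \<Omega> \<and> \<bar>t - x\<bar> < \<delta> \<and> M * \<bar>t - x\<bar> * N \<le> 1/2" for t
  have ev_good: "eventually good (at x)"
  proof -
    have "eventually (\<lambda>t. t \<in> \<Omega>) (at x)" using om by (rule eventually_at_in_open')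
    moreover have "eventually (\<lambda>t. \<bar>t - x\<bar> < min \<delta> (1 / (2 * (\<bar>M\<bar> + 1) * N))) (at x)"
    proof -
      have "((\<lambda>t. \<bar>t - x\<bar>) \<longlongrightarrow> 0) (at x)"
        by (intro tendsto_rabs_zero LIM_zero tendsto_ident_at)
      then show ?thesis using M(1) N(1)
        by (intro order_tendstoD(2)) (auto simp: add_pos_nonneg)
    qed
    ultimately show ?thesis
    proof eventually_elim
      case (elim t)
      have "M * \<bar>t - x\<bar> * N \<le> (\<bar>M\<bar> + 1) * \<bar>t - x\<bar> * N"
        using N(1) by (intro mult_right_mono) auto
      also have "\<dots> \<le> (\<bar>M\<bar> + 1) * (1 / (2 * (\<bar>M\<bar> + 1) * N)) * N"
        using elim N(1) by (intro mult_right_mono mult_left_mono) auto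
      also have "\<dots> = 1/2"
      proof -
        have "\<bar>M\<bar> + 1 > 0" by (simp add: add_nonneg_pos)
        moreover have "N * (\<bar>M\<bar> + 1) > 0" using N(1) \<open>\<bar>M\<bar> + 1 > 0\<close> by simp
        ultimately show ?thesis using N(1) by (simp add: field_simps)
      qed
      finally show ?case using elim by (simp add: good_def)
    qed
  qed
  have bnd: "norm (inv (X t) z) \<le> 2 * N * norm z" if "good t" for t z
  proof -
    have t: "t \<in> \<Omega>" "\<bar>t - x\<bar> < \<delta>" "M * \<bar>t - x\<bar> * N \<le> 1/2" using that by (auto simp: good_def)
    define v where "v = inv (X t) z"
    have Xv: "X t v = z" using bij[OF t(1)] by (simp add: v_def bij_is_surj surj_f_inv_f)
    have ix: "inv (X x) (X x v) = v" using bij[OF om(2)] by (simp add: bij_is_inj)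
    have "norm v \<le> N * norm (X x v)" using N(2)[of "X x v"] ix by simp
    moreover have "norm (X x v) \<le> norm (X t v) + norm (X t v - X x v)"
      using norm_triangle_sub[of "X x v" "X t v"] by (simp add: norm_minus_commute)
    moreover have "norm (X t v - X x v) \<le> M * \<bar>t - x\<bar> * norm v" using M(2)[OF t(2)] .
    ultimately have "norm v \<le> N * (norm z + M * \<bar>t - x\<bar> * norm v)"
      using N(1) Xv by (metis (no_types, lifting) add_left_mono less_imp_le mult_left_mono order_trans)
    also have "\<dots> = N * norm z + (M * \<bar>t - x\<bar> * N) * norm v" by (simp add: algebra_simps)
    also have "\<dots> \<le> N * norm z + 1/2 * norm v" using t(3) by (intro add_left_mono mult_right_mono) auto
    finally have "norm v \<le> N * norm z + 1/2 * norm v" .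
    then show ?thesis unfolding v_def[symmetric] by linarith
  qed
  define z0 where "z0 = inv (X x) (w x)"
  define p where "p = w' - X' z0"
  define z1 where "z1 = inv (X x) p"
  define q where "q t = (w t - w x) /\<^sub>R (t - x) - (X t z0 - X x z0) /\<^sub>R (t - x)" for t
  have q: "(q \<longlongrightarrow> p) (at x)"
    unfolding q_def[abs_def] p_def using w dX[of z0] unfolding vd_iff by (rule tendsto_diff)
  have Xz0: "X x z0 = w x" and Xz1: "X x z1 = p"
    using bij[OF om(2)] by (simp_all add: z0_def z1_def bij_is_surj surj_f_inv_f)
  have ev_bnd: "eventually (\<lambda>t. \<forall>z. norm (inv (X t) z) \<le> 2 * N * norm z) (at x)"
  proof (rule eventually_mono[OF ev_good])
    fix t assume "good t" then show "\<forall>z. norm (inv (X t) z) \<le> 2 * N * norm z" using bnd by blast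
  qed
  have A: "((\<lambda>t. inv (X t) (q t - p)) \<longlongrightarrow> 0) (at x)"
    using ev_bnd by (rule null_family) (use q in \<open>simp add: LIM_zero\<close>)
  have B: "((\<lambda>t. inv (X t) (X x z1 - X t z1)) \<longlongrightarrow> 0) (at x)"
  proof (rule null_family[OF ev_bnd])
    have "((\<lambda>t. - (X t z1 - X x z1)) \<longlongrightarrow> - 0) (at x)"
      by (intro tendsto_minus vd_cont0[OF dX])
    then show "((\<lambda>t. X x z1 - X t z1) \<longlongrightarrow> 0) (at x)" by simp
  qed
  have C: "((\<lambda>t. inv (X t) (q t - p) + inv (X t) (X x z1 - X t z1) + inv (X x) p) \<longlongrightarrow> 0 + 0 + inv (X x) p) (at x)"
    by (intro tendsto_add A B tendsto_const)
  have C': "((\<lambda>t. inv (X t) (q t - p) + inv (X t) (X x z1 - X t z1) + inv (X x) p) \<longlongrightarrow> inv (X x) (w' - X' (inv (X x) (w x)))) (at x)"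
    using C by (simp add: p_def z0_def)
  show ?thesis
    unfolding vd_iff
  proof (rule Lim_transform_eventually[OF C'])
    have "eventually (\<lambda>t. good t \<and> t \<noteq> x) (at x)"
      using ev_good by (simp add: eventually_conj_iff eventually_at_filter)
    then show "\<forall>\<^sub>F t in at x. inv (X t) (q t - p) + inv (X t) (X x z1 - X t z1) + inv (X x) p =
        (inv (X t) (w t) - inv (X x) (w x)) /\<^sub>R (t - x)"
    proof (rule eventually_mono)
      fix t assume t: "good t \<and> t \<noteq> x"
      then have tO: "t \<in> \<Omega>" by (simp add: good_def)
      interpret bl: bounded_linear "inv (X t)" using ilin[OF tO] .
      have i1: "inv (X t) (X t z1) = z1" using bij[OF tO] by (simp add: bij_is_inj)
      have "inv (X t) (q t - p) + inv (X t) (X x z1 - X t z1) + inv (X x) p = inv (X t) (q t)"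
        using i1 by (simp add: bl.diff Xz1 z1_def[symmetric])
      also have "\<dots> = (inv (X t) (w t) - inv (X t) (w x) - (inv (X t) (X t z0) - inv (X t) (X x z0))) /\<^sub>R (t - x)"
        by (simp add: q_def bl.diff bl.scaleR scaleR_diff_right[symmetric] del: scaleR_diff_right)
      also have "inv (X t) (X t z0) = z0" using bij[OF tO] by (simp add: bij_is_inj)
      finally show "inv (X t) (q t - p) + inv (X t) (X x z1 - X t z1) + inv (X x) p =
        (inv (X t) (w t) - inv (X x) (w x)) /\<^sub>R (t - x)"
        using Xz0 by (simp add: z0_def)
    qed
  qed
qed


lemma cmat_apply:
  fixes f :: "complex^2 \<Rightarrow> complex^2"
  assumes add: "\<And>a b. f (a + b) = f a + f b" and sc: "\<And>c e. f (c *s e) = c *s f e"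
  shows "cmat f *v v = f v"
proof -
  have v: "v = v$1 *s axis 1 1 + v$2 *s axis 2 1"
    by (simp add: vec_eq_iff forall_2 axis_def)
  have "f v = f (v$1 *s axis 1 1 + v$2 *s axis 2 1)" using v by metis
  also have "\<dots> = v$1 *s f (axis 1 1) + v$2 *s f (axis 2 1)" by (simp add: add sc)
  finally show ?thesis by (simp add: vec_eq_iff cmat_def matrix_vector_mult_def sum_2 mult.commute)
qed

lemma resolvent_eq:
  assumes "is_resolvent sc A D lam R"
  shows "resolvent sc A D lam = R"
  unfolding resolvent_def
proof (rule the_equality)
  show "is_resolvent sc A D lam R" by (rule assms)
  fix R' assume R': "is_resolvent sc A D lam R'"
  show "R' = R"
  proof
    fix u
    have "R' u \<in> D" using R' by (auto simp: is_resolvent_def)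
    then have "R (sc lam (R' u) - A (R' u)) = R' u" using assms by (auto simp: is_resolvent_def)
    moreover have "sc lam (R' u) - A (R' u) = u" using R' by (auto simp: is_resolvent_def)
    ultimately show "R' u = R u" by simp
  qed
qed


lemma mvneg: "(M::'a::ring_1^'n^'m) *v (- v) = - (M *v v)"
  by (metis diff_0 matrix_vector_mult_diff_distrib matrix_vector_mult_0_right)

theorem mainTheorem3:
  fixes sc :: "complex \<Rightarrow> 'k::{real_inner,complete_space} \<Rightarrow> 'k"
    and F :: "'k \<Rightarrow> 'k \<Rightarrow> complex"
    and \<sigma>1 \<sigma>2 \<gamma> :: "complex^2^2"
    and A A\<zeta> :: "'k \<Rightarrow> 'k" and D :: "'k set"
    and C :: "real \<Rightarrow> 'k \<Rightarrow> complex^2" and X :: "real \<Rightarrow> 'k \<Rightarrow> 'k"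
    and B :: "real \<Rightarrow> complex^2 \<Rightarrow> 'k" and \<gamma>s :: "real \<Rightarrow> complex^2^2"
    and \<Omega> :: "real set" and lam :: complex and u :: "real \<Rightarrow> complex^2"
  assumes "krein_space sc F"
    and "invertible \<sigma>1" and "cadj \<sigma>1 = \<sigma>1" and "cadj \<sigma>2 = \<sigma>2" and "cadj \<gamma> = - \<gamma>"
    and "vessel sc \<sigma>1 \<sigma>2 \<gamma> A A\<zeta> D C X B \<gamma>s \<Omega>"
    and "open \<Omega>"
    and "lam \<notin> op_spectrum sc A D"
    and "\<forall>x\<in>\<Omega>. \<exists>u'. (u has_vector_derivative u') (at x) \<and>
           lam *s (\<sigma>2 *v u x) - \<sigma>1 *v u' + \<gamma> *v u x = 0"
  shows "\<forall>x\<in>\<Omega>. \<exists>y'.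
           ((\<lambda>t. transfer_fn sc A D C X B \<sigma>1 lam t *v u t) has_vector_derivative y') (at x) \<and>
           lam *s (\<sigma>2 *v (transfer_fn sc A D C X B \<sigma>1 lam x *v u x)) - \<sigma>1 *v y'
             + \<gamma>s x *v (transfer_fn sc A D C X B \<sigma>1 lam x *v u x) = 0"
proof
  fix x assume xO: "x \<in> \<Omega>"
  note ves = assms(6)[unfolded vessel_def]
  note pre = ves[THEN conjunct1, unfolded prevessel_def]
  have node: "\<And>t. is_node sc \<sigma>1 (C t) A\<zeta> (X t) A (B t) D" using pre by blast
  have BD: "\<And>t e. B t (\<sigma>2 *v e) \<in> D" using pre by blast
  have dB: "\<And>t e. ((\<lambda>s. B s e) has_vector_derivative
              (- (A (B t (\<sigma>2 *v (matrix_inv \<sigma>1 *v e))) + B t (\<gamma> *v (matrix_inv \<sigma>1 *v e))))) (at t)"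
    using pre by blast
  have dCd: "\<And>t v. (\<lambda>s. C s v) differentiable (at t)" using pre by blast
  have dC: "\<And>t v. v \<in> D \<Longrightarrow> ((\<lambda>s. C s v) has_vector_derivative
              (matrix_inv \<sigma>1 *v (- (\<sigma>2 *v C t (A\<zeta> v)) + \<gamma> *v C t v))) (at t)"
    using pre by blast
  have dX: "\<And>t v. ((\<lambda>s. X s v) has_vector_derivative B t (\<sigma>2 *v C t v)) (at t)" using pre by blast
  have inode: "\<And>t. t \<in> \<Omega> \<Longrightarrow> invertible_node sc \<sigma>1 (C t) A\<zeta> (X t) A (B t) D" using ves by blast
  have gs: "\<gamma>s x = \<gamma> + \<sigma>2 ** cmat (\<lambda>e. C x (inv (X x) (B x (\<sigma>1 *v e))))
                         - \<sigma>1 ** cmat (\<lambda>e. C x (inv (X x) (B x (\<sigma>2 *v e))))" using ves xO by blast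
  have Clin: "\<And>t. bounded_linear (C t)" and Chom: "\<And>t c v. C t (sc c v) = c *s C t v"
    using node by (auto simp: is_node_def clinear_to_def)
  have Xlin: "\<And>t. bounded_linear (X t)" and XD: "\<And>t. X t ` D \<subseteq> D"
    using node by (auto simp: is_node_def clinear_op_def)
  have Blin: "\<And>t. bounded_linear (B t)" and Bhom: "\<And>t c e. B t (c *s e) = sc c (B t e)"
    using node by (auto simp: is_node_def clinear_from_def)
  have neq: "\<And>t v. v \<in> D \<Longrightarrow> A (X t v) + X t (A\<zeta> v) + B t (\<sigma>1 *v C t v) = 0"
    using node by (auto simp: is_node_def)
  have Xbij: "\<And>t. t \<in> \<Omega> \<Longrightarrow> bij (X t)" and Xilin: "\<And>t. t \<in> \<Omega> \<Longrightarrow> bounded_linear (inv (X t))"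
    and Xihom: "\<And>t c v. t \<in> \<Omega> \<Longrightarrow> inv (X t) (sc c v) = sc c (inv (X t) v)"
    and XiD: "\<And>t. t \<in> \<Omega> \<Longrightarrow> inv (X t) ` D \<subseteq> D"
    using inode by (auto simp: invertible_node_def clinear_op_def)
  obtain R where isR: "is_resolvent sc A D lam R" using assms(8) by (auto simp: op_spectrum_def)
  have Res: "resolvent sc A D lam = R" using resolvent_eq[OF isR] .
  have Rlin: "bounded_linear R" and Rhom: "\<And>c v. R (sc c v) = sc c (R v)" and RD: "\<And>v. R v \<in> D"
    and R1: "\<And>v. sc lam (R v) - A (R v) = v" and R2: "\<And>v. v \<in> D \<Longrightarrow> R (sc lam v - A v) = v"
    using isR by (auto simp: is_resolvent_def clinear_op_def)
  obtain u' where u': "(u has_vector_derivative u') (at x)" "lam *s (\<sigma>2 *v u x) - \<sigma>1 *v u' + \<gamma> *v u x = 0"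
    using assms(9) xO by blast
  define \<sigma>i where "\<sigma>i = matrix_inv \<sigma>1"
  have si: "\<sigma>i ** \<sigma>1 = mat 1" "\<sigma>1 ** \<sigma>i = mat 1"
    using someI_ex[OF assms(2)[unfolded invertible_def]] by (auto simp: \<sigma>i_def matrix_inv_def)
  have s1: "\<And>v. \<sigma>i *v (\<sigma>1 *v v) = v" "\<And>v. \<sigma>1 *v (\<sigma>i *v v) = v"
    by (simp_all add: matrix_vector_mul_assoc si)
  define Xi where "Xi = inv (X x)"
  have dw0: "((\<lambda>t. \<sigma>1 *v u t) has_vector_derivative \<sigma>1 *v u') (at x)"
    by (rule bounded_linear.has_vector_derivative[OF matrix_vector_mul_bounded_linear u'(1)])
  define w1' where "w1' = B x (\<sigma>1 *v u') + (- (A (B x (\<sigma>2 *v u x)) + B x (\<gamma> *v u x)))"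
  have dw1: "((\<lambda>t. B t (\<sigma>1 *v u t)) has_vector_derivative w1') (at x)"
    using deriv_apply[OF Blin differentiableI_vector[OF dB] dB[where t=x and e="\<sigma>1 *v u x", folded \<sigma>i_def] dw0]
    by (simp add: s1 w1'_def)
  have dw2: "((\<lambda>t. R (B t (\<sigma>1 *v u t))) has_vector_derivative R w1') (at x)"
    by (rule bounded_linear.has_vector_derivative[OF Rlin dw1])
  define z where "z = Xi (R (B x (\<sigma>1 *v u x)))"
  have zD: "z \<in> D" using XiD[OF xO] RD by (auto simp: z_def Xi_def)
  define w3' where "w3' = Xi (R w1' - B x (\<sigma>2 *v C x z))"
  have dw3: "((\<lambda>t. inv (X t) (R (B t (\<sigma>1 *v u t)))) has_vector_derivative w3') (at x)"
    using deriv_inv[OF Xlin assms(7) xO Xbij Xilin dX dw2] by (simp add: w3'_def z_def Xi_def)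
  define w4' where "w4' = C x w3' + \<sigma>i *v (- (\<sigma>2 *v C x (A\<zeta> z)) + \<gamma> *v C x z)"
  have dw4: "((\<lambda>t. C t (inv (X t) (R (B t (\<sigma>1 *v u t))))) has_vector_derivative w4') (at x)"
    using deriv_apply[OF Clin dCd _ dw3] dC[OF zD, of x, folded \<sigma>i_def] by (simp add: w4'_def z_def Xi_def)
  have dy: "((\<lambda>t. u t - C t (inv (X t) (R (B t (\<sigma>1 *v u t))))) has_vector_derivative u' - w4') (at x)"
    by (intro has_vector_derivative_diff u'(1) dw4)
  have tf: "transfer_fn sc A D C X B \<sigma>1 lam t *v v = v - C t (inv (X t) (R (B t (\<sigma>1 *v v))))"
    if "t \<in> \<Omega>" for t v
  proof -
    interpret bC: bounded_linear "C t" by (rule Clin)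
    interpret bB: bounded_linear "B t" by (rule Blin)
    interpret bR: bounded_linear R by (rule Rlin)
    interpret bX: bounded_linear "inv (X t)" by (rule Xilin[OF that])
    have "cmat (\<lambda>e. C t (inv (X t) (R (B t (\<sigma>1 *v e))))) *v v = C t (inv (X t) (R (B t (\<sigma>1 *v v))))"
      by (rule cmat_apply) (simp_all add: matrix_vector_right_distrib bC.add bB.add bR.add bX.add
          vector_scalar_commute Bhom Rhom Xihom[OF that] Chom)
    then show ?thesis
      by (simp add: transfer_fn_def Res matrix_vector_mult_diff_rdistrib)
  qed
  show "\<exists>y'. ((\<lambda>t. transfer_fn sc A D C X B \<sigma>1 lam t *v u t) has_vector_derivative y') (at x) \<and>
           lam *s (\<sigma>2 *v (transfer_fn sc A D C X B \<sigma>1 lam x *v u x)) - \<sigma>1 *v y'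
             + \<gamma>s x *v (transfer_fn sc A D C X B \<sigma>1 lam x *v u x) = 0"
  proof (intro exI conjI)
    show "((\<lambda>t. transfer_fn sc A D C X B \<sigma>1 lam t *v u t) has_vector_derivative u' - w4') (at x)"
      by (rule has_vector_derivative_transform_within_open[OF dy assms(7) xO]) (simp add: tf)
    show "lam *s (\<sigma>2 *v (transfer_fn sc A D C X B \<sigma>1 lam x *v u x)) - \<sigma>1 *v (u' - w4')
             + \<gamma>s x *v (transfer_fn sc A D C X B \<sigma>1 lam x *v u x) = 0"
    proof -
      interpret bC: bounded_linear "C x" by (rule Clin)
      interpret bB: bounded_linear "B x" by (rule Blin)
      interpret bR: bounded_linear R by (rule Rlin)
      interpret bX: bounded_linear Xi unfolding Xi_def by (rule Xilin[OF xO])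
      define v where "v = u x"
      define c where "c = C x z"
      define y where "y = v - c"
      define K where "K e = C x (Xi (B x e))" for e
      have Kadd: "K (a - b) = K a - K b" for a b by (simp add: K_def bB.diff bX.diff bC.diff)
      have Ty: "transfer_fn sc A D C X B \<sigma>1 lam x *v u x = y"
        using tf[OF xO] by (simp add: y_def c_def z_def Xi_def v_def)
      have uv: "\<sigma>1 *v u' = lam *s (\<sigma>2 *v v) + \<gamma> *v v"
        using u'(2) unfolding v_def by (simp add: algebra_simps eq_neg_iff_add_eq_0 eq_diff_eq)
      define b2 where "b2 = B x (\<sigma>2 *v v)"
      have Rb2: "R (sc lam b2) - R (A b2) = b2"
        using R2[OF BD[of x v]] by (simp add: b2_def bR.diff)
      have "R w1' = R (sc lam b2) + R (B x (\<gamma> *v v)) - (R (A b2) + R (B x (\<gamma> *v v)))"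
        by (simp add: w1'_def uv bB.add Bhom bR.add bR.diff bR.neg b2_def[symmetric] v_def[symmetric])
      also have "\<dots> = b2" using Rb2 by (simp add: algebra_simps)
      finally have Rw1: "R w1' = b2" .
      have Cw3: "C x w3' = K (\<sigma>2 *v y)"
        by (simp add: w3'_def Rw1 b2_def K_def y_def c_def matrix_vector_mult_diff_distrib bB.diff)
      define b1 where "b1 = B x (\<sigma>1 *v v)"
      have Xz: "X x z = R b1"
        using Xbij[OF xO] by (simp add: z_def Xi_def b1_def v_def bij_is_surj surj_f_inv_f)
      have "X x (A\<zeta> z) = - A (X x z) - B x (\<sigma>1 *v c)"
        using neq[OF zD, of x] unfolding c_def by (simp add: eq_neg_iff_add_eq_0 algebra_simps)
      also have "\<dots> = B x (\<sigma>1 *v y) - sc lam (R b1)"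
        using R1[of b1] by (simp add: Xz y_def b1_def matrix_vector_mult_diff_distrib bB.diff algebra_simps)
      finally have XA: "X x (A\<zeta> z) = B x (\<sigma>1 *v y) - sc lam (R b1)" .
      have "A\<zeta> z = Xi (X x (A\<zeta> z))"
        using Xbij[OF xO] by (simp add: Xi_def bij_is_inj)
      also have "\<dots> = Xi (B x (\<sigma>1 *v y)) - sc lam z"
      proof -
        have "Xi (R b1) = z" by (simp add: z_def b1_def v_def)
        moreover have "Xi (sc lam (R b1)) = sc lam (Xi (R b1))" using Xihom[OF xO] by (simp add: Xi_def)
        ultimately show ?thesis by (simp only: XA bX.diff)
      qed
      finally have "A\<zeta> z = Xi (B x (\<sigma>1 *v y)) - sc lam z" .
      then have CA: "C x (A\<zeta> z) = K (\<sigma>1 *v y) - lam *s c"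
        by (simp add: bC.diff Chom K_def c_def)
      have Kmat: "cmat (\<lambda>e. C x (inv (X x) (B x (M *v e)))) *v y = K (M *v y)" for M :: "complex^2^2"
        unfolding K_def Xi_def[symmetric]
        by (rule cmat_apply) (simp_all add: matrix_vector_right_distrib bC.add bB.add bX.add
          vector_scalar_commute Bhom Xihom[OF xO, folded Xi_def] Chom)
      have gy: "\<gamma>s x *v y = \<gamma> *v y + \<sigma>2 *v K (\<sigma>1 *v y) - \<sigma>1 *v K (\<sigma>2 *v y)"
        by (simp add: gs matrix_vector_mult_diff_rdistrib matrix_vector_mult_add_rdistrib
            matrix_vector_mul_assoc[symmetric] Kmat)
      have sw4: "\<sigma>1 *v w4' = \<sigma>1 *v K (\<sigma>2 *v y) - \<sigma>2 *v (K (\<sigma>1 *v y) - lam *s c) + \<gamma> *v c"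
        by (simp add: w4'_def Cw3 CA s1 matrix_vector_right_distrib mvneg c_def[symmetric])
      have "lam *s (\<sigma>2 *v y) - \<sigma>1 *v (u' - w4') + \<gamma>s x *v y =
            lam *s (\<sigma>2 *v (y + c)) - \<sigma>1 *v u' + \<gamma> *v (y + c)"
        by (simp add: gy sw4 matrix_vector_mult_diff_distrib matrix_vector_right_distrib
            vector_ssub_ldistrib vector_add_ldistrib vector_scalar_commute algebra_simps)
      also have "\<dots> = 0" by (simp add: y_def uv)
      finally show ?thesis by (simp add: Ty)
    qed
  qed
qed

end
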